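(* Let $(a_n)_{n\ge1}$ be an Euler–Gauss sequence such that $\gcd(a_n,n)=1$ for all $n\ge1$. Then $(a_n)$ is a Gauss sequence.
   Context: $\mu$ is the Möbius function. For an integer sequence $(a_n)$ and $n\ge1$, $A_n^+=\prod_{d\mid n,\ \mu(d)=1} a_{n/d}$ and $A_n^-=\prod_{d\mid n,\ \mu(d)=-1} a_{n/d}$ (empty products equal $1$). An Euler–Gauss sequence is an integer sequence with $A_n^+\equiv A_n^-\pmod n$ for all $n\ge1$. A Gauss sequence is an integer sequence with $\sum_{d\mid n}\mu(d)a_{n/d}\equiv0\pmod n$ for all $n\ge1$. *)

theory Defs
  imports "HOL-Computational_Algebra.Computational_Algebra" "HOL-Number_Theory.Number_Theory"
begin

definition moebius_mu :: "nat \<Rightarrow> int" where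
  "moebius_mu d = (if d = 0 then 0
                   else if squarefree d then (-1) ^ card (prime_factors d) else 0)"

definition A_plus :: "(nat \<Rightarrow> int) \<Rightarrow> nat \<Rightarrow> int" where
  "A_plus a n = (\<Prod>d \<in> {d. d dvd n \<and> moebius_mu d = 1}. a (n div d))"

definition A_minus :: "(nat \<Rightarrow> int) \<Rightarrow> nat \<Rightarrow> int" where
  "A_minus a n = (\<Prod>d \<in> {d. d dvd n \<and> moebius_mu d = -1}. a (n div d))"

text \<open>Sequences are indexed by positive naturals; the value at 0 is ignored.\<close>
definition euler_gauss_seq :: "(nat \<Rightarrow> int) \<Rightarrow> bool" where
  "euler_gauss_seq a \<longleftrightarrow> (\<forall>n\<ge>1. [A_plus a n = A_minus a n] (mod int n))"

definition gauss_seq :: "(nat \<Rightarrow> int) \<Rightarrow> bool" where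
  "gauss_seq a \<longleftrightarrow> (\<forall>n\<ge>1. (\<Sum>d | d dvd n. moebius_mu d * a (n div d)) mod int n = 0)"

end

theory Submission
  imports Defs
begin

lemma mu_nz: "moebius_mu d \<noteq> 0 \<longleftrightarrow> d \<noteq> 0 \<and> squarefree d"
  by (simp add: moebius_mu_def)

lemma mu_one: "moebius_mu 1 = 1"
  by (simp add: moebius_mu_def)

lemma mu_Suc0: "moebius_mu (Suc 0) = 1"
  using mu_one by simp

lemma mu_pmult:
  assumes p: "prime p" and nd: "\<not> p dvd d"
  shows "moebius_mu (p * d) = - moebius_mu d"
proof -
  have d0: "d \<noteq> 0" using nd by (metis dvd_0_right)
  have p0: "p \<noteq> 0" using p by auto
  have cop: "coprime p d" using p nd by (simp add: prime_imp_coprime)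
  have sq: "squarefree (p * d) \<longleftrightarrow> squarefree d"
    using squarefree_multD(2)[of p d] squarefree_mult_coprime[OF cop squarefree_prime[OF p]] by blast
  have pf: "prime_factors (p * d) = insert p (prime_factors d)"
    using prime_factors_product[OF p0 d0] prime_prime_factors[OF p] by simp
  have pn: "p \<notin> prime_factors d" using nd by (auto simp: in_prime_factors_iff)
  have "card (prime_factors (p * d)) = Suc (card (prime_factors d))"
    using pf pn by simp
  then show ?thesis using sq d0 p0 by (simp add: moebius_mu_def)
qed

lemma divset:
  assumes p: "prime p" and nm: "\<not> p dvd m" and k: "k \<ge> 1"
  shows "(d dvd p^k*m \<and> moebius_mu d \<noteq> 0) \<longleftrightarrow>
         (d dvd m \<and> moebius_mu d \<noteq> 0) \<or> (\<exists>e. d = p*e \<and> e dvd m \<and> moebius_mu e \<noteq> 0)"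
proof
  assume h: "d dvd p^k*m \<and> moebius_mu d \<noteq> 0"
  show "(d dvd m \<and> moebius_mu d \<noteq> 0) \<or> (\<exists>e. d = p*e \<and> e dvd m \<and> moebius_mu e \<noteq> 0)"
  proof (cases "p dvd d")
    case True
    then obtain e where e: "d = p*e" by auto
    have sqd: "squarefree d" using h mu_nz by blast
    have ne: "\<not> p dvd e"
    proof
      assume "p dvd e"
      then have "p^2 dvd d" using e by (auto simp: power2_eq_square)
      then have "p dvd 1" using sqd squarefreeD by blast
      then show False using p by auto
    qed
    have "moebius_mu e \<noteq> 0" using mu_pmult[OF p ne] e h by simp
    moreover have "e dvd m"
    proof -
      obtain j where j: "k = Suc j" using k by (cases k) auto
      have "p*e dvd p*(p^j*m)" using h e j by (simp add: mult.assoc)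
      then have "e dvd p^j*m" using p by (auto simp: prime_gt_0_nat)
      moreover have "coprime e (p^j)" using ne p
        by (metis coprime_commute prime_imp_coprime coprime_power_right_iff)
      ultimately show ?thesis by (simp add: coprime_dvd_mult_right_iff)
    qed
    ultimately show ?thesis using e by blast
  next
    case False
    have "coprime d (p^k)" using False p
      by (metis coprime_commute prime_imp_coprime coprime_power_right_iff)
    then have "d dvd m" using h by (simp add: coprime_dvd_mult_right_iff)
    then show ?thesis using h by blast
  qed
next
  assume h: "(d dvd m \<and> moebius_mu d \<noteq> 0) \<or> (\<exists>e. d = p*e \<and> e dvd m \<and> moebius_mu e \<noteq> 0)"
  show "d dvd p^k*m \<and> moebius_mu d \<noteq> 0"
  proof (cases "d dvd m \<and> moebius_mu d \<noteq> 0")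
    case True then show ?thesis by auto
  next
    case False
    then obtain e where e: "d = p*e" "e dvd m" "moebius_mu e \<noteq> 0" using h by blast
    have ne: "\<not> p dvd e" using e nm dvd_trans by blast
    have "p dvd p^k" using k by (simp add: dvd_power)
    then have "d dvd p^k*m" using e by (simp add: mult_dvd_mono)
    then show ?thesis using mu_pmult[OF p ne] e by simp
  qed
qed

lemma divset_c:
  assumes p: "prime p" and nm: "\<not> p dvd m" and k: "k \<ge> 1" and c: "c \<noteq> 0"
  shows "{d. d dvd p^k*m \<and> moebius_mu d = c} =
         {d. d dvd m \<and> moebius_mu d = c} \<union> (\<lambda>d. p*d) ` {d. d dvd m \<and> moebius_mu d = -c}"
proof -
  have "d dvd p^k*m \<and> moebius_mu d = c \<longleftrightarrow>
        (d dvd m \<and> moebius_mu d = c) \<or> (\<exists>e. d = p*e \<and> e dvd m \<and> moebius_mu e = -c)" for d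
  proof -
    have "d dvd p^k*m \<and> moebius_mu d = c \<longleftrightarrow> (d dvd p^k*m \<and> moebius_mu d \<noteq> 0) \<and> moebius_mu d = c"
      using c by auto
    also have "\<dots> \<longleftrightarrow> ((d dvd m \<and> moebius_mu d \<noteq> 0) \<or> (\<exists>e. d = p*e \<and> e dvd m \<and> moebius_mu e \<noteq> 0)) \<and> moebius_mu d = c"
      using divset[OF p nm k] by simp
    also have "\<dots> \<longleftrightarrow> (d dvd m \<and> moebius_mu d = c) \<or> (\<exists>e. d = p*e \<and> e dvd m \<and> moebius_mu e = -c)"
    proof -
      have "e dvd m \<Longrightarrow> moebius_mu (p*e) = - moebius_mu e" for e
        using mu_pmult[OF p] nm dvd_trans by blast
      then show ?thesis using c by fastforce
    qed
    finally show ?thesis .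
  qed
  then show ?thesis by blast
qed

lemma divset_nz:
  assumes p: "prime p" and nm: "\<not> p dvd m" and k: "k \<ge> 1"
  shows "{d. d dvd p^k*m \<and> moebius_mu d \<noteq> 0} =
         {d. d dvd m \<and> moebius_mu d \<noteq> 0} \<union> (\<lambda>d. p*d) ` {d. d dvd m \<and> moebius_mu d \<noteq> 0}"
  using divset[OF p nm k] by blast

lemma disj_img:
  assumes p: "prime p" and nm: "\<not> p dvd m"
  shows "{d. d dvd m \<and> P d} \<inter> (\<lambda>d. p*d) ` {d. d dvd m \<and> Q d} = {}"
  using nm dvd_trans by fastforce

lemma div_facts:
  fixes p m d :: nat
  assumes p: "prime p" and k: "k \<ge> 1" and d: "d dvd m"
  shows "p^k*m div d = p^k*(m div d)" "p^k*m div (p*d) = p^(k-1)*(m div d)"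
proof -
  show "p^k*m div d = p^k*(m div d)" using d by (simp add: div_mult_swap)
  obtain j where j: "k = Suc j" using k by (cases k) auto
  have pk: "p^k = p * p^(k-1)" using j by simp
  have "p^k*m div (p*d) = (p * (p^(k-1)*m)) div (p*d)" using pk by (simp add: mult.assoc)
  also have "\<dots> = p^(k-1)*m div d" using p prime_gt_0_nat by simp
  also have "\<dots> = p^(k-1)*(m div d)" using d by (simp add: div_mult_swap)
  finally show "p^k*m div (p*d) = p^(k-1)*(m div d)" .
qed

lemma prod_split:
  fixes a :: "nat \<Rightarrow> int"
  assumes p: "prime p" and nm: "\<not> p dvd m" and k: "k \<ge> 1" and c: "c \<noteq> 0"
  shows "(\<Prod>d \<in> {d. d dvd p^k*m \<and> moebius_mu d = c}. a (p^k*m div d)) =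
         (\<Prod>d \<in> {d. d dvd m \<and> moebius_mu d = c}. a (p^k*(m div d))) *
         (\<Prod>d \<in> {d. d dvd m \<and> moebius_mu d = -c}. a (p^(k-1)*(m div d)))"
proof -
  have m0: "m > 0" using nm by (metis dvd_0_right gr0I)
  have fin: "finite {d. d dvd m \<and> P d}" for P
    by (rule finite_subset[of _ "{d. d dvd m}"]) (auto simp: m0)
  have inj: "inj_on (\<lambda>d. p*d) A" for A using p by (auto simp: inj_on_def prime_gt_0_nat)
  have "(\<Prod>d \<in> {d. d dvd p^k*m \<and> moebius_mu d = c}. a (p^k*m div d)) =
        (\<Prod>d \<in> {d. d dvd m \<and> moebius_mu d = c}. a (p^k*m div d)) *
        (\<Prod>d \<in> (\<lambda>d. p*d) ` {d. d dvd m \<and> moebius_mu d = -c}. a (p^k*m div d))"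
    unfolding divset_c[OF p nm k c]
    by (rule prod.union_disjoint) (auto simp: fin disj_img[OF p nm])
  also have "(\<Prod>d \<in> (\<lambda>d. p*d) ` {d. d dvd m \<and> moebius_mu d = -c}. a (p^k*m div d)) =
             (\<Prod>d \<in> {d. d dvd m \<and> moebius_mu d = -c}. a (p^k*m div (p*d)))"
    by (subst prod.reindex[OF inj]) simp
  also have "\<dots> = (\<Prod>d \<in> {d. d dvd m \<and> moebius_mu d = -c}. a (p^(k-1)*(m div d)))"
    by (rule prod.cong) (auto simp: div_facts[OF p k])
  also have "(\<Prod>d \<in> {d. d dvd m \<and> moebius_mu d = c}. a (p^k*m div d)) =
             (\<Prod>d \<in> {d. d dvd m \<and> moebius_mu d = c}. a (p^k*(m div d)))"
    by (rule prod.cong) (auto simp: div_facts[OF p k])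
  finally show ?thesis .
qed

lemma sum_split:
  fixes a :: "nat \<Rightarrow> int"
  assumes p: "prime p" and nm: "\<not> p dvd m" and k: "k \<ge> 1"
  shows "(\<Sum>d | d dvd p^k*m. moebius_mu d * a (p^k*m div d)) =
         (\<Sum>d \<in> {d. d dvd m \<and> moebius_mu d \<noteq> 0}. moebius_mu d * (a (p^k*(m div d)) - a (p^(k-1)*(m div d))))"
proof -
  have m0: "m > 0" using nm by (metis dvd_0_right gr0I)
  have pkm0: "p^k*m > 0" using m0 p by (simp add: prime_gt_0_nat)
  have finn: "finite {d. d dvd p^k*m}" using finite_divisors_nat[OF pkm0] .
  have fin: "finite {d. d dvd m \<and> P d}" for P
    by (rule finite_subset[of _ "{d. d dvd m}"]) (auto simp: m0)
  have inj: "inj_on (\<lambda>d. p*d) A" for A using p by (auto simp: inj_on_def prime_gt_0_nat)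
  have "(\<Sum>d | d dvd p^k*m. moebius_mu d * a (p^k*m div d)) =
        (\<Sum>d \<in> {d. d dvd p^k*m \<and> moebius_mu d \<noteq> 0}. moebius_mu d * a (p^k*m div d))"
    by (rule sum.mono_neutral_right) (auto simp: finn)
  also have "\<dots> = (\<Sum>d \<in> {d. d dvd m \<and> moebius_mu d \<noteq> 0}. moebius_mu d * a (p^k*m div d)) +
        (\<Sum>d \<in> (\<lambda>d. p*d) ` {d. d dvd m \<and> moebius_mu d \<noteq> 0}. moebius_mu d * a (p^k*m div d))"
    unfolding divset_nz[OF p nm k]
    by (rule sum.union_disjoint) (auto simp: fin disj_img[OF p nm])
  also have "(\<Sum>d \<in> (\<lambda>d. p*d) ` {d. d dvd m \<and> moebius_mu d \<noteq> 0}. moebius_mu d * a (p^k*m div d)) =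
             (\<Sum>d \<in> {d. d dvd m \<and> moebius_mu d \<noteq> 0}. moebius_mu (p*d) * a (p^k*m div (p*d)))"
    by (subst sum.reindex[OF inj]) simp
  also have "\<dots> = (\<Sum>d \<in> {d. d dvd m \<and> moebius_mu d \<noteq> 0}. - moebius_mu d * a (p^(k-1)*(m div d)))"
  proof (rule sum.cong)
    fix d assume "d \<in> {d. d dvd m \<and> moebius_mu d \<noteq> 0}"
    then have d: "d dvd m" by auto
    then have "\<not> p dvd d" using nm dvd_trans by blast
    then show "moebius_mu (p*d) * a (p^k*m div (p*d)) = - moebius_mu d * a (p^(k-1)*(m div d))"
      using mu_pmult[OF p] div_facts[OF p k d] by simp
  qed simp
  also have "(\<Sum>d \<in> {d. d dvd m \<and> moebius_mu d \<noteq> 0}. moebius_mu d * a (p^k*m div d)) =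
             (\<Sum>d \<in> {d. d dvd m \<and> moebius_mu d \<noteq> 0}. moebius_mu d * a (p^k*(m div d)))"
    by (rule sum.cong) (auto simp: div_facts[OF p k])
  finally show ?thesis by (simp add: right_diff_distrib sum_subtractf sum_negf)
qed

lemma local_cong:
  fixes a :: "nat \<Rightarrow> int"
  assumes EG: "euler_gauss_seq a" and G: "\<forall>n\<ge>1. gcd (a n) (int n) = 1" and p: "prime p"
  shows "\<not> p dvd m \<Longrightarrow> (\<forall>k\<ge>1. [a (p^k*m) = a (p^(k-1)*m)] (mod (int p)^k)) \<and> coprime (a m) (int p)"
proof (induction m rule: less_induct)
  case (less m)
  have m0: "m > 0" using less.prems by (metis dvd_0_right gr0I)
  have p0: "p > 0" using p by (simp add: prime_gt_0_nat)
  have fin: "finite {d. d dvd m \<and> P d}" for P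
    by (rule finite_subset[of _ "{d. d dvd m}"]) (auto simp: m0)
  have cong: "[a (p^k*m) = a (p^(k-1)*m)] (mod (int p)^k)" if k: "k \<ge> 1" for k
  proof -
    define X where "X d = a (p^k*(m div d))" for d
    define Y where "Y d = a (p^(k-1)*(m div d))" for d
    define P where "P = {d. d dvd m \<and> moebius_mu d = 1}"
    define M where "M = {d. d dvd m \<and> moebius_mu d = -1}"
    have IH: "[X d = Y d] (mod (int p)^k) \<and> coprime (Y d) (int p)" if d: "d dvd m" "d \<noteq> 1" for d
    proof -
      have d0: "d \<noteq> 0" using d m0 by auto
      have lt: "m div d < m" using d d0 m0 by simp
      have dm: "m div d dvd m" using d by (metis dvd_div_mult_self dvd_triv_left)
      have nd: "\<not> p dvd m div d" using dm less.prems dvd_trans by blast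
      have ih: "(\<forall>k\<ge>1. [a (p^k*(m div d)) = a (p^(k-1)*(m div d))] (mod (int p)^k)) \<and> coprime (a (m div d)) (int p)"
        using less.IH[OF lt nd] .
      have c1: "[X d = Y d] (mod (int p)^k)" using ih k by (simp add: X_def Y_def)
      have c2: "coprime (Y d) (int p)"
      proof (cases "k = 1")
        case True then show ?thesis using ih by (simp add: Y_def)
      next
        case False
        have md0: "m div d > 0" using d(1) m0 by (metis dvd_div_mult_self mult_0 gr0I less_irrefl)
        have "p^(k-1)*(m div d) \<ge> 1" using p0 md0 by simp
        then have "gcd (Y d) (int (p^(k-1)*(m div d))) = 1" using G unfolding Y_def by blast
        then have "coprime (Y d) (int p ^ (k-1) * int (m div d))" by (simp add: coprime_iff_gcd_eq_1)
        then show ?thesis using False k by simp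
      qed
      show ?thesis using c1 c2 by blast
    qed
    have Ap: "A_plus a (p^k*m) = prod X P * prod Y M"
      using prod_split[OF p less.prems k, of 1 a] by (simp add: A_plus_def X_def Y_def P_def M_def)
    have Am: "A_minus a (p^k*m) = prod X M * prod Y P"
      using prod_split[OF p less.prems k, of "-1" a] by (simp add: A_minus_def X_def Y_def P_def M_def)
    have 1: "1 \<in> P" by (simp add: P_def mu_one mu_Suc0)
    have n1: "1 \<notin> M" by (simp add: M_def mu_one mu_Suc0)
    have fP: "finite P" using fin by (simp add: P_def)
    have XP: "prod X P = X 1 * prod X (P - {1})" using prod.remove[OF fP 1] .
    have YP: "prod Y P = Y 1 * prod Y (P - {1})" using prod.remove[OF fP 1] .
    define R where "R = prod Y (P - {1}) * prod Y M"
    have c1: "[prod X (P - {1}) = prod Y (P - {1})] (mod (int p)^k)"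
      by (rule cong_prod) (use IH in \<open>auto simp: P_def\<close>)
    have c2: "[prod X M = prod Y M] (mod (int p)^k)"
      by (rule cong_prod) (use IH n1 in \<open>auto simp: M_def\<close>)
    have e1: "[A_plus a (p^k*m) = X 1 * R] (mod (int p)^k)"
      unfolding Ap XP R_def mult.assoc by (intro cong_mult cong_refl c1 c2)
    have e2: "[A_minus a (p^k*m) = Y 1 * R] (mod (int p)^k)"
    proof -
      have "[A_minus a (p^k*m) = prod Y M * (Y 1 * prod Y (P - {1}))] (mod (int p)^k)"
        unfolding Am YP by (intro cong_mult cong_refl c2)
      then show ?thesis by (simp add: R_def ac_simps)
    qed
    have cR: "coprime R (int p)"
    proof -
      have "coprime (prod Y (P - {1})) (int p)"
        by (rule prod_coprime_left) (use IH in \<open>auto simp: P_def\<close>)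
      moreover have "coprime (prod Y M) (int p)"
        by (rule prod_coprime_left) (use IH n1 in \<open>auto simp: M_def\<close>)
      ultimately show ?thesis by (simp add: R_def)
    qed
    then have cRk: "coprime R ((int p)^k)" by simp
    have "p^k*m \<ge> 1" using p0 m0 by simp
    then have "[A_plus a (p^k*m) = A_minus a (p^k*m)] (mod int (p^k*m))"
      using EG unfolding euler_gauss_seq_def by blast
    then have "[A_plus a (p^k*m) = A_minus a (p^k*m)] (mod (int p)^k)"
      by (rule cong_dvd_modulus) simp
    then have "[X 1 * R = Y 1 * R] (mod (int p)^k)"
      using e1 e2 by (meson cong_sym cong_trans)
    then have "[X 1 = Y 1] (mod (int p)^k)" using cong_mult_rcancel[OF cRk] by blast
    then show ?thesis by (simp add: X_def Y_def)
  qed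
  have "[a (p*m) = a m] (mod int p)" using cong[of 1] by simp
  moreover have "coprime (a (p*m)) (int p)"
  proof -
    have "p*m \<ge> 1" using p0 m0 by simp
    then have "gcd (a (p*m)) (int (p*m)) = 1" using G by blast
    then have "coprime (a (p*m)) (int p * int m)" by (simp add: coprime_iff_gcd_eq_1)
    then show ?thesis by simp
  qed
  ultimately have "coprime (a m) (int p)" using cong_imp_coprime by blast
  then show ?case using cong by blast
qed

lemma gauss_local:
  fixes a :: "nat \<Rightarrow> int"
  assumes EG: "euler_gauss_seq a" and G: "\<forall>n\<ge>1. gcd (a n) (int n) = 1" and p: "prime p"
    and n: "n \<ge> 1" and pj: "p^j dvd n"
  shows "(int p)^j dvd (\<Sum>d | d dvd n. moebius_mu d * a (n div d))"
proof (cases "j = 0")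
  case True then show ?thesis by simp
next
  case False
  have n0: "n \<noteq> 0" using n by simp
  have nu: "\<not> is_unit p" using p by auto
  obtain m where nm: "n = p ^ multiplicity p n * m" "\<not> p dvd m"
    using multiplicity_decompose'[OF n0 nu] by blast
  define e where "e = multiplicity p n"
  have je: "j \<le> e" using multiplicity_geI[OF n0 nu pj] by (simp add: e_def)
  have e1: "e \<ge> 1" using je False by simp
  have "(\<Sum>d | d dvd n. moebius_mu d * a (n div d)) =
        (\<Sum>d \<in> {d. d dvd m \<and> moebius_mu d \<noteq> 0}. moebius_mu d * (a (p^e*(m div d)) - a (p^(e-1)*(m div d))))"
    using sum_split[OF p nm(2) e1, of a] nm(1) by (simp add: e_def)
  also have "(int p)^e dvd \<dots>"
  proof (rule dvd_sum)
    fix d assume "d \<in> {d. d dvd m \<and> moebius_mu d \<noteq> 0}"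
    then have d: "d dvd m" by auto
    have dm: "m div d dvd m" using d by (metis dvd_div_mult_self dvd_triv_left)
    have nd: "\<not> p dvd m div d" using dm nm(2) dvd_trans by blast
    have "[a (p^e*(m div d)) = a (p^(e-1)*(m div d))] (mod (int p)^e)"
      using local_cong[OF EG G p nd] e1 by blast
    then have "(int p)^e dvd (a (p^e*(m div d)) - a (p^(e-1)*(m div d)))"
      by (simp add: cong_iff_dvd_diff)
    then show "(int p)^e dvd moebius_mu d * (a (p^e*(m div d)) - a (p^(e-1)*(m div d)))"
      by simp
  qed
  finally show ?thesis using je by (meson dvd_trans le_imp_power_dvd)
qed

theorem theorem3:
  fixes a :: "nat \<Rightarrow> int"
  assumes "euler_gauss_seq a"
    and "\<forall>n\<ge>1. gcd (a n) (int n) = 1"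
  shows "gauss_seq a"
  unfolding gauss_seq_def
proof (intro allI impI)
  fix n :: nat assume n: "n \<ge> 1"
  define S where "S = (\<Sum>d | d dvd n. moebius_mu d * a (n div d))"
  have "int n dvd S"
  proof (cases "S = 0")
    case True then show ?thesis by simp
  next
    case False
    show ?thesis
    proof (rule multiplicity_le_imp_dvd)
      show "int n \<noteq> 0" using n by simp
      fix q :: int assume q: "prime q"
      have q0: "q \<ge> 0" using q by (simp add: prime_ge_0_int)
      have pn: "prime (nat q)" using q by simp
      have qi: "int (nat q) = q" using q0 by simp
      define j where "j = multiplicity q (int n)"
      have "q^j dvd int n" unfolding j_def by (rule multiplicity_dvd)
      then have "int ((nat q)^j) dvd int n" using qi by simp
      then have "(nat q)^j dvd n" by (simp only: of_nat_dvd_iff)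
      then have "(int (nat q))^j dvd S"
        unfolding S_def using gauss_local[OF assms pn n] by blast
      then have "q^j dvd S" using qi by simp
      moreover have "\<not> is_unit q" using q by auto
      ultimately show "multiplicity q (int n) \<le> multiplicity q S"
        using multiplicity_geI[OF False] unfolding j_def by blast
    qed
  qed
  then show "S mod int n = 0" by simp
qed

end
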